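(* Let $M_\lambda$ ($\lambda>0$) and $M$ be as in the context. Then $M_\lambda'(x)\to M'(x)$ as $\lambda\to0^+$, uniformly for $x$ in each compact subset of $[0,\infty)$.
   Context: For $\lambda>0$, $M_\lambda:[0,\infty)\to\mathbb R$ is defined by $M_\lambda(x)=0$ for $0\le x\le1$ and, for all $x>0$, $M_{\lambda}(x+1)=\int_0^x\frac{\lambda e^{-\lambda t}}{1-e^{-\lambda x}}\bigl(M_{\lambda}(t)+M_{\lambda}(x-t)\bigr)\,dt+1$. This is the expected number of intervals at saturation in the exponential parking problem. $M:[0,\infty)\to\mathbb R$ is defined by $M(x)=0$ for $0\le x\le1$ and, for $x>0$, $M(x+1)=\frac2x\int_0^xM(t)\,dt+1$. This is Rényi's expected number of intervals at saturation in the uniform parking problem. Derivatives are taken where they exist. Following the paper's convention, $M'_\lambda(x)=M'(x)=0$ on $(0,1)\cup(1,2)$; the points $x=1,2$, where the derivatives do not exist, are excluded. *)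

theory Defs
  imports "HOL-Analysis.Analysis"
begin

definition is_M_lambda :: "real \<Rightarrow> (real \<Rightarrow> real) \<Rightarrow> bool" where
  "is_M_lambda l f \<longleftrightarrow>
     (\<forall>x\<in>{0..1}. f x = 0) \<and>
     (\<forall>x>0. f (x + 1) =
        integral {0..x} (\<lambda>t. l * exp (- l * t) / (1 - exp (- l * x)) * (f t + f (x - t))) + 1)"

definition is_M_renyi :: "(real \<Rightarrow> real) \<Rightarrow> bool" where
  "is_M_renyi f \<longleftrightarrow>
     (\<forall>x\<in>{0..1}. f x = 0) \<and>
     (\<forall>x>0. f (x + 1) = 2 / x * integral {0..x} f + 1)"

definition deriv0 :: "(real \<Rightarrow> real) \<Rightarrow> real \<Rightarrow> real" where
  "deriv0 f x = (THE D. (f has_real_derivative D) (at x within {0..}))"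

end

theory Submission imports Defs "HOL-Analysis.Analysis" "HOL-Real_Asymp.Real_Asymp" begin

lemma integral_reflect_0x:
  fixes g :: "real \<Rightarrow> real"
  assumes "(g has_integral i) {0..x}"
  shows "((\<lambda>t. g (x - t)) has_integral i) {0..x}"
  using has_integral_affinity[of g i 0 x "-1" x] assms by simp

lemma deriv0_eq:
  assumes "(f has_real_derivative D) (at y within {0..})" "0 \<le> y"
  shows "deriv0 f y = D"
proof -
  have nb: "at y within {0..} \<noteq> bot"
  proof
    assume "at y within {0..} = bot"
    moreover have "at y within {y..y+1} \<le> at y within {0..}"
      by (rule at_le) (use assms in auto)
    moreover have "at y within {y..y+1} = at_right y"
      by (rule at_within_Icc_at_right) simp
    ultimately show False using trivial_limit_at_right_real[of y] bot_unique by metis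
  qed
  show ?thesis unfolding deriv0_def
    by (rule the_equality[where P="\<lambda>D. (f has_real_derivative D) (at y within {0..})", OF assms(1)])
       (use has_field_derivative_unique[OF _ assms(1) nb] in blast)
qed

locale park =
  fixes f p q u v p' q' :: "real \<Rightarrow> real"
  assumes f01: "\<And>x. 0 \<le> x \<Longrightarrow> x \<le> 1 \<Longrightarrow> f x = 0"
    and rec: "\<And>x. x > 0 \<Longrightarrow> (\<And>w. continuous_on UNIV w \<Longrightarrow> (\<lambda>t. w t * f t) integrable_on {0..x})
       \<Longrightarrow> f (x+1) = 1 + p x * integral {0..x} (\<lambda>t. u t * f t) + q x * integral {0..x} (\<lambda>t. v t * f t)"
    and pd: "\<And>x. x > 0 \<Longrightarrow> (p has_real_derivative p' x) (at x)"
    and qd: "\<And>x. x > 0 \<Longrightarrow> (q has_real_derivative q' x) (at x)"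
    and uc: "continuous_on UNIV u" and vc: "continuous_on UNIV v"
begin

definition "U x = integral {0..x} (\<lambda>t. u t * f t)"
definition "V x = integral {0..x} (\<lambda>t. v t * f t)"

lemma pc: "continuous_on {0<..} p"
  by (meson DERIV_isCont continuous_at_imp_continuous_on greaterThan_iff pd)
lemma qc: "continuous_on {0<..} q"
  by (meson DERIV_isCont continuous_at_imp_continuous_on greaterThan_iff qd)

lemma f12: assumes "1 < y" "y \<le> 2" shows "f y = 1"
proof -
  have z: "(\<lambda>t. w t * f t) integrable_on {0..y-1} \<and> integral {0..y-1} (\<lambda>t. w t * f t) = 0" for w
  proof -
    have eq: "\<And>t. t \<in> {0..y-1} \<Longrightarrow> w t * f t = 0" using f01 assms by auto
    have "(\<lambda>t. w t * f t) integrable_on {0..y-1}"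
      by (rule integrable_eq[of "\<lambda>_. 0"]) (use eq in auto)
    moreover have "integral {0..y-1} (\<lambda>t. w t * f t) = integral {0..y-1} (\<lambda>_. 0)"
      by (rule integral_cong) (use eq in auto)
    ultimately show ?thesis by simp
  qed
  have "f (y - 1 + 1) = 1" using rec[of "y-1"] z assms by simp
  then show ?thesis by simp
qed

lemma intg_upto:
  assumes "continuous_on {2..b} f" "2 \<le> b" "continuous_on UNIV w" "x \<le> b"
  shows "(\<lambda>t. w t * f t) integrable_on {0..x}"
proof -
  have i1: "(\<lambda>t. w t * f t) integrable_on {0..1}"
    by (rule integrable_eq[of "\<lambda>_. 0"]) (use f01 in auto)
  have "w integrable_on {1..2}"
    by (rule integrable_continuous_real) (rule continuous_on_subset[OF assms(3)], simp)
  then have i2: "(\<lambda>t. w t * f t) integrable_on {1..2}"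
    by (rule integrable_spike_finite[of "{1}", rotated 2]) (auto simp: f12)
  have "continuous_on {2..b} (\<lambda>t. w t * f t)"
    by (intro continuous_intros assms(1) continuous_on_subset[OF assms(3)]) simp
  then have i3: "(\<lambda>t. w t * f t) integrable_on {2..b}" by (rule integrable_continuous_real)
  have "(\<lambda>t. w t * f t) integrable_on {0..b}"
    using Henstock_Kurzweil_Integration.integrable_combine[OF _ _ Henstock_Kurzweil_Integration.integrable_combine[OF _ _ i1 i2] i3] assms(2) by simp
  then show ?thesis
    by (rule integrable_subinterval_real) (use assms in auto)
qed

lemma cont_n: "continuous_on {2..2 + real n} f"
proof (induction n)
  case 0
  then show ?case by simp
next
  case (Suc n)
  let ?b = "2 + real n"
  have ig: "\<And>w x. continuous_on UNIV w \<Longrightarrow> x \<le> ?b \<Longrightarrow> (\<lambda>t. w t * f t) integrable_on {0..x}"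
    by (rule intg_upto[OF Suc.IH]) auto
  have Uc: "continuous_on {0..?b} U" unfolding U_def
    by (rule indefinite_integral_continuous_1) (rule ig[OF uc], simp)
  have Vc: "continuous_on {0..?b} V" unfolding V_def
    by (rule indefinite_integral_continuous_1) (rule ig[OF vc], simp)
  have eq: "f y = 1 + p (y-1) * U (y-1) + q (y-1) * V (y-1)" if "y \<in> {2..2 + real (Suc n)}" for y
  proof -
    have "f (y - 1 + 1) = 1 + p (y-1) * U (y-1) + q (y-1) * V (y-1)"
      unfolding U_def V_def by (rule rec) (use that ig in auto)
    then show ?thesis by simp
  qed
  have sub: "(\<lambda>y. y - 1) ` {2..2 + real (Suc n)} \<subseteq> {0<..}" "(\<lambda>y. y - 1) ` {2..2 + real (Suc n)} \<subseteq> {0..?b}"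
    by auto
  have "continuous_on {2..2 + real (Suc n)} (\<lambda>y. 1 + p (y-1) * U (y-1) + q (y-1) * V (y-1))"
    by (intro continuous_intros continuous_on_compose2[OF pc _ sub(1)] continuous_on_compose2[OF qc _ sub(1)]
        continuous_on_compose2[OF Uc _ sub(2)] continuous_on_compose2[OF Vc _ sub(2)])
  then show ?case by (rule continuous_on_eq) (use eq in auto)
qed

lemma cont_b: "continuous_on {2..b} f"
proof -
  obtain n where "b < real n" using reals_Archimedean2 by blast
  then have "{2..b} \<subseteq> {2..2+real n}" by auto
  then show ?thesis using continuous_on_subset[OF cont_n[of n]] by blast
qed

lemma intg: "continuous_on UNIV w \<Longrightarrow> (\<lambda>t. w t * f t) integrable_on {0..x}"
  by (rule intg_upto[OF cont_b[of "max 2 x"]]) auto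

lemma repr: "x > 0 \<Longrightarrow> f (x + 1) = 1 + p x * U x + q x * V x"
  unfolding U_def V_def by (rule rec) (auto intro: intg)

lemma bnd: "\<exists>B\<ge>0. \<forall>t\<in>{0..b}. \<bar>f t\<bar> \<le> B"
proof -
  have "compact (f ` {2..b})" by (rule compact_continuous_image[OF cont_b]) simp
  then obtain B where B: "\<forall>z\<in>f ` {2..b}. norm z \<le> B" using compact_imp_bounded bounded_iff by metis
  have "\<bar>f t\<bar> \<le> max 1 B" if "t \<in> {0..b}" for t
  proof (cases "t \<le> 2")
    case True
    then show ?thesis using f01[of t] f12[of t] that by (cases "t \<le> 1") auto
  next
    case False
    then have "f t \<in> f ` {2..b}" using that by auto
    then have "norm (f t) \<le> B" using B by blast
    then show ?thesis by simp
  qed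
  then show ?thesis by (intro exI[of _ "max 1 B"]) auto
qed

lemma Uc: "continuous_on {0..b} U" unfolding U_def
  by (rule indefinite_integral_continuous_1) (rule intg[OF uc])
lemma Vc: "continuous_on {0..b} V" unfolding V_def
  by (rule indefinite_integral_continuous_1) (rule intg[OF vc])

lemma Uat: "0 < x \<Longrightarrow> isCont U x"
  by (rule continuous_on_interior[OF Uc[of "x+1"]]) simp
lemma Vat: "0 < x \<Longrightarrow> isCont V x"
  by (rule continuous_on_interior[OF Vc[of "x+1"]]) simp

definition "g y = 1 + p (y-1) * U (y-1) + q (y-1) * V (y-1)"

lemma fg: "1 < y \<Longrightarrow> f y = g y"
  using repr[of "y-1"] unfolding g_def by simp

lemma gcont: "1 < y \<Longrightarrow> isCont g y"
proof -
  assume y: "1 < y"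
  have s: "isCont (\<lambda>y. y - 1) y" by simp
  have "isCont (\<lambda>y. p (y-1)) y" by (rule isCont_o2[OF s]) (rule DERIV_isCont[OF pd], use y in simp)
  moreover have "isCont (\<lambda>y. q (y-1)) y" by (rule isCont_o2[OF s]) (rule DERIV_isCont[OF qd], use y in simp)
  moreover have "isCont (\<lambda>y. U (y-1)) y" by (rule isCont_o2[OF s]) (rule Uat, use y in simp)
  moreover have "isCont (\<lambda>y. V (y-1)) y" by (rule isCont_o2[OF s]) (rule Vat, use y in simp)
  ultimately show "isCont g y" unfolding g_def by (intro continuous_intros) auto
qed

lemma fcont: assumes "1 < z" shows "isCont f z"
proof -
  have "continuous_on {1<..} g" by (intro continuous_at_imp_continuous_on ballI gcont) auto
  then have "continuous_on {1<..} f" by (rule continuous_on_eq) (auto simp: fg)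
  then show ?thesis using assms continuous_on_eq_continuous_at[of "{1<..}" f] by auto
qed

lemma Uder: assumes "1 < x" shows "(U has_real_derivative u x * f x) (at x)"
proof -
  have "((\<lambda>y. integral {0..y} (\<lambda>t. u t * f t)) has_vector_derivative u x * f x) (at x within {0..x+1} - {})"
  proof (rule integral_has_vector_derivative_continuous_at)
    have "isCont u x" using uc continuous_on_eq_continuous_at[of UNIV u] by auto
    then have "isCont (\<lambda>t. u t * f t) x" using fcont[of x] assms by (intro isCont_mult) auto
    then show "continuous (at x within {0..x+1} - {}) (\<lambda>t. u t * f t)"
      by (rule continuous_at_imp_continuous_at_within)
  qed (use assms intg[OF uc] in auto)
  moreover have "at x within {0..x+1} - {} = at x" using assms by (intro at_within_interior) auto
  ultimately show ?thesis unfolding U_def has_real_derivative_iff_has_vector_derivative by simp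
qed

lemma Vder: assumes "1 < x" shows "(V has_real_derivative v x * f x) (at x)"
proof -
  have "((\<lambda>y. integral {0..y} (\<lambda>t. v t * f t)) has_vector_derivative v x * f x) (at x within {0..x+1} - {})"
  proof (rule integral_has_vector_derivative_continuous_at)
    have "isCont v x" using vc continuous_on_eq_continuous_at[of UNIV v] by auto
    then have "isCont (\<lambda>t. v t * f t) x" using fcont[of x] assms by (intro isCont_mult) auto
    then show "continuous (at x within {0..x+1} - {}) (\<lambda>t. v t * f t)"
      by (rule continuous_at_imp_continuous_at_within)
  qed (use assms intg[OF vc] in auto)
  moreover have "at x within {0..x+1} - {} = at x" using assms by (intro at_within_interior) auto
  ultimately show ?thesis unfolding V_def has_real_derivative_iff_has_vector_derivative by simp
qed

lemma fder: assumes "2 < y"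
  shows "(f has_real_derivative
     (p' (y-1) * U (y-1) + q' (y-1) * V (y-1) + (p (y-1) * u (y-1) + q (y-1) * v (y-1)) * f (y-1))) (at y)"
proof -
  let ?x = "y - 1"
  let ?h = "\<lambda>x. 1 + p x * U x + q x * V x"
  have x: "1 < ?x" "0 < ?x" using assms by auto
  have "(?h has_real_derivative
      (0 + (p' ?x * U ?x + (u ?x * f ?x) * p ?x) + (q' ?x * V ?x + (v ?x * f ?x) * q ?x))) (at ?x)"
    by (rule DERIV_add[OF DERIV_add[OF DERIV_const DERIV_mult[OF pd[OF x(2)] Uder[OF x(1)]]]
       DERIV_mult[OF qd[OF x(2)] Vder[OF x(1)]]])
  then have "(?h has_real_derivative
     (p' ?x * U ?x + q' ?x * V ?x + (p ?x * u ?x + q ?x * v ?x) * f ?x)) (at (y + -1))"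
    by (simp add: algebra_simps)
  then have "((\<lambda>z. ?h (z + -1)) has_real_derivative
     (p' ?x * U ?x + q' ?x * V ?x + (p ?x * u ?x + q ?x * v ?x) * f ?x)) (at y)"
    using DERIV_shift[THEN iffD1, OF \<open>(?h has_real_derivative _) (at (y + -1))\<close>] by simp
  then show ?thesis
    by (rule has_field_derivative_transform_within_open[of _ _ _ "{1<..}"])
       (use assms fg in \<open>auto simp: g_def\<close>)
qed

lemma deriv_gt2: assumes "2 < y" shows "deriv0 f y =
   p' (y-1) * U (y-1) + q' (y-1) * V (y-1) + (p (y-1) * u (y-1) + q (y-1) * v (y-1)) * f (y-1)"
proof -
  have "(f has_real_derivative
     (p' (y-1) * U (y-1) + q' (y-1) * V (y-1) + (p (y-1) * u (y-1) + q (y-1) * v (y-1)) * f (y-1))) (at y within {0..})"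
    by (rule has_field_derivative_at_within[OF fder[OF assms]])
  then show ?thesis by (rule deriv0_eq) (use assms in simp)
qed

lemma deriv_12: assumes "1 < y" "y < 2" shows "deriv0 f y = 0"
proof -
  have e: "(\<lambda>_. 1) z = f z" if "z \<in> {1<..<2}" for z using f12[of z] that by simp
  have "((\<lambda>_. 1::real) has_real_derivative 0) (at y)" by simp
  then have "(f has_real_derivative 0) (at y)"
    by (rule has_field_derivative_transform_within_open[of _ _ _ "{1<..<2}"]) (use assms e in auto)
  then have "(f has_real_derivative 0) (at y within {0..})" by (rule has_field_derivative_at_within)
  then show ?thesis by (rule deriv0_eq) (use assms in simp)
qed

lemma deriv_01: assumes "0 \<le> y" "y < 1" shows "deriv0 f y = 0"
proof -
  have e: "(\<lambda>_. 0) z = f z" if "z \<in> {0..}" "dist z y < 1 - y" for z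
    using f01[of z] that by (auto simp: dist_real_def)
  have "((\<lambda>_. 0::real) has_real_derivative 0) (at y within {0..})" by simp
  then have "(f has_real_derivative 0) (at y within {0..})"
    by (rule has_field_derivative_transform_within[of _ _ _ _ "1 - y"]) (use assms e in auto)
  then show ?thesis by (rule deriv0_eq) (use assms in simp)
qed

lemma repr': "x > 0 \<Longrightarrow> f (x + 1) = 1 + p x * integral {0..x} (\<lambda>t. u t * f t) + q x * integral {0..x} (\<lambda>t. v t * f t)"
  using repr unfolding U_def V_def .

lemma deriv_gt2': "2 < y \<Longrightarrow> deriv0 f y =
   p' (y-1) * integral {0..y-1} (\<lambda>t. u t * f t) + q' (y-1) * integral {0..y-1} (\<lambda>t. v t * f t)
   + (p (y-1) * u (y-1) + q (y-1) * v (y-1)) * f (y-1)"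
  using deriv_gt2 unfolding U_def V_def .

lemma intgI: "continuous_on UNIV w \<Longrightarrow> ((\<lambda>t. w t * f t) has_integral integral {0..x} (\<lambda>t. w t * f t)) {0..x}"
  using intg by blast


end


definition pL :: "real \<Rightarrow> real \<Rightarrow> real" where "pL l x = l / (1 - exp (- l * x))"
definition qL :: "real \<Rightarrow> real \<Rightarrow> real" where "qL l x = l * exp (- l * x) / (1 - exp (- l * x))"
definition dL :: "real \<Rightarrow> real \<Rightarrow> real" where "dL l x = - (l^2 * exp (- l * x)) / (1 - exp (- l * x))^2"

lemma expne: "0 < l \<Longrightarrow> 0 < x \<Longrightarrow> 1 - exp (- l * x) \<noteq> (0::real)"
  by simp

lemma pL_der: assumes "0 < l" "0 < x" shows "(pL l has_real_derivative dL l x) (at x)"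
proof -
  have ne: "1 - exp (- l * x) \<noteq> 0" using assms by simp
  have "((\<lambda>x. l / (1 - exp (- l * x))) has_real_derivative
      (- (l * (- (exp (- l * x) * (- l * 1)))) / (1 - exp (- l * x))^2)) (at x)"
    using ne by (auto intro!: derivative_eq_intros simp: power2_eq_square)
  then show ?thesis unfolding pL_def dL_def fun_eq_iff by (simp add: power2_eq_square mult_ac)
qed

lemma qL_der: assumes "0 < l" "0 < x" shows "(qL l has_real_derivative dL l x) (at x)"
proof -
  have ne: "1 - exp (- l * x) \<noteq> 0" using assms by simp
  have "((\<lambda>x. l * exp (- l * x) / (1 - exp (- l * x))) has_real_derivative
      ((l * (exp (- l * x) * (- l))) * (1 - exp (- l * x)) - l * exp (- l * x) * (- (exp (- l * x) * (- l))))
        / (1 - exp (- l * x))^2) (at x)"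
    using ne by (auto intro!: derivative_eq_intros simp: power2_eq_square)
  moreover have "((l * (exp (- l * x) * (- l))) * (1 - exp (- l * x)) - l * exp (- l * x) * (- (exp (- l * x) * (- l))))
        / (1 - exp (- l * x))^2 = dL l x"
    unfolding dL_def by (simp add: algebra_simps power2_eq_square)
  ultimately show ?thesis unfolding qL_def by simp
qed


lemma parkL:
  assumes l: "0 < l" and M: "is_M_lambda l f"
  shows "park f (pL l) (qL l) (\<lambda>t. exp (- l * t)) (\<lambda>t. exp (l * t)) (dL l) (dL l)"
proof
  show "\<And>x. 0 \<le> x \<Longrightarrow> x \<le> 1 \<Longrightarrow> f x = 0" using M unfolding is_M_lambda_def by auto
  show "\<And>x. 0 < x \<Longrightarrow> (pL l has_real_derivative dL l x) (at x)" using pL_der l by auto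
  show "\<And>x. 0 < x \<Longrightarrow> (qL l has_real_derivative dL l x) (at x)" using qL_der l by auto
  show "continuous_on UNIV (\<lambda>t. exp (- l * t))" by (intro continuous_intros)
  show "continuous_on UNIV (\<lambda>t. exp (l * t))" by (intro continuous_intros)
next
  fix x :: real
  assume x: "0 < x" and ig: "\<And>w. continuous_on UNIV w \<Longrightarrow> (\<lambda>t. w t * f t) integrable_on {0..x}"
  define c where "c = l / (1 - exp (- l * x))"
  define A where "A = integral {0..x} (\<lambda>t. exp (- l * t) * f t)"
  define B where "B = integral {0..x} (\<lambda>t. exp (l * t) * f t)"
  have IA: "((\<lambda>t. exp (- l * t) * f t) has_integral A) {0..x}"
    unfolding A_def by (rule integrable_integral, rule ig) (intro continuous_intros)
  have IB: "((\<lambda>t. exp (l * t) * f t) has_integral B) {0..x}"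
    unfolding B_def by (rule integrable_integral, rule ig) (intro continuous_intros)
  have IB2: "((\<lambda>t. exp (- l * x) * (exp (l * (x - t)) * f (x - t))) has_integral exp (- l * x) * B) {0..x}"
    using has_integral_mult_right[OF integral_reflect_0x[OF IB]] by simp
  have e: "exp (- l * x) * (exp (l * (x - t)) * f (x - t)) = exp (- l * t) * f (x - t)" for t
  proof -
    have "exp (- l * x) * exp (l * (x - t)) = exp (- l * x + l * (x - t))" by (rule exp_add[symmetric])
    also have "\<dots> = exp (- l * t)" by (simp add: algebra_simps)
    finally have "exp (- l * x) * exp (l * (x - t)) = exp (- l * t)" .
    then show ?thesis by (metis mult.assoc)
  qed
  have "((\<lambda>t. c * (exp (- l * t) * f t) + c * (exp (- l * t) * f (x - t))) has_integral c * A + c * (exp (- l * x) * B)) {0..x}"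
  proof (intro has_integral_add has_integral_mult_right IA)
    have fe: "(\<lambda>t. exp (- l * x) * (exp (l * (x - t)) * f (x - t))) = (\<lambda>t. exp (- l * t) * f (x - t))"
      by (rule ext) (rule e)
    show "((\<lambda>t. exp (- l * t) * f (x - t)) has_integral exp (- l * x) * B) {0..x}"
      using IB2 unfolding fe .
  qed
  moreover have "l * exp (- l * t) / (1 - exp (- l * x)) * (f t + f (x - t)) =
     c * (exp (- l * t) * f t) + c * (exp (- l * t) * f (x - t))" for t
    unfolding c_def by (simp add: add_divide_distrib[symmetric] algebra_simps)
  ultimately have "integral {0..x} (\<lambda>t. l * exp (- l * t) / (1 - exp (- l * x)) * (f t + f (x - t))) = c * A + c * (exp (- l * x) * B)"
    by (simp add: integral_unique)
  moreover have "f (x + 1) = integral {0..x} (\<lambda>t. l * exp (- l * t) / (1 - exp (- l * x)) * (f t + f (x - t))) + 1"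
    using M x unfolding is_M_lambda_def by auto
  ultimately show "f (x + 1) = 1 + pL l x * integral {0..x} (\<lambda>t. exp (- l * t) * f t) + qL l x * integral {0..x} (\<lambda>t. exp (l * t) * f t)"
    unfolding A_def B_def c_def pL_def qL_def by (simp add: field_simps)
qed

lemma parkR:
  assumes M: "is_M_renyi f"
  shows "park f (\<lambda>x. 2 / x) (\<lambda>_. 0) (\<lambda>_. 1) (\<lambda>_. 0) (\<lambda>x. - 2 / x^2) (\<lambda>_. 0)"
proof
  show "\<And>x. 0 \<le> x \<Longrightarrow> x \<le> 1 \<Longrightarrow> f x = 0" using M unfolding is_M_renyi_def by auto
  show "((\<lambda>x. 2 / x) has_real_derivative - 2 / x^2) (at x)" if "0 < x" for x
    using that by (auto intro!: derivative_eq_intros simp: power2_eq_square)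
  show "((\<lambda>_. 0) has_real_derivative 0) (at x)" for x by simp
  show "continuous_on UNIV (\<lambda>_. 1::real)" "continuous_on UNIV (\<lambda>_. 0::real)" by simp_all
  show "f (x + 1) = 1 + 2 / x * integral {0..x} (\<lambda>t. 1 * f t) + 0 * integral {0..x} (\<lambda>t. 0 * f t)" if "0 < x" for x
    using M that unfolding is_M_renyi_def by auto
qed


lemma unif_small:
  fixes h :: "real \<Rightarrow> real"
  assumes "(h \<longlongrightarrow> c) (at_right 0)" "0 < e" "0 < R"
  shows "eventually (\<lambda>l. \<forall>x\<in>{0<..R}. \<bar>h (l * x) - c\<bar> < e) (at_right 0)"
proof -
  have "eventually (\<lambda>w. dist (h w) c < e) (at_right 0)" using tendstoD[OF assms(1,2)] .
  then obtain b where b: "b > 0" "\<And>w. w > 0 \<Longrightarrow> w < b \<Longrightarrow> dist (h w) c < e"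
    unfolding eventually_at_right_field by auto
  show ?thesis unfolding eventually_at_right_field
  proof (intro exI[of _ "b / R"] conjI allI impI ballI)
    show "0 < b / R" using b assms by simp
    fix l x assume l: "0 < l" "l < b / R" and x: "x \<in> {0<..R}"
    have "l * x \<le> l * R" using x l by (intro mult_left_mono) auto
    also have "\<dots> < b" using l assms(3) by (simp add: field_simps)
    finally have "l * x < b" .
    moreover have "0 < l * x" using l x by simp
    ultimately show "\<bar>h (l * x) - c\<bar> < e" using b(2)[of "l * x"] by (simp add: dist_real_def)
  qed
qed

lemma mul_le: "\<bar>a::real\<bar> \<le> A \<Longrightarrow> \<bar>b\<bar> \<le> B \<Longrightarrow> \<bar>a * b\<bar> \<le> A * B"
  by (simp add: abs_mult mult_mono')

definition a1 :: "real \<Rightarrow> real" where "a1 w = w / (1 - exp (- w))"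
definition b1 :: "real \<Rightarrow> real" where "b1 w = w * exp (- w) / (1 - exp (- w))"
definition a2 :: "real \<Rightarrow> real" where "a2 w = w^2 * exp (- w) / (1 - exp (- w))^2"
definition b2 :: "real \<Rightarrow> real" where "b2 w = w * (1 + exp (- w)) / (1 - exp (- w))"

lemma a1_lim: "(a1 \<longlongrightarrow> 1) (at_right 0)" unfolding a1_def by real_asymp
lemma b1_lim: "(b1 \<longlongrightarrow> 1) (at_right 0)" unfolding b1_def by real_asymp
lemma a2_lim: "(a2 \<longlongrightarrow> 1) (at_right 0)" unfolding a2_def by real_asymp
lemma b2_lim: "(b2 \<longlongrightarrow> 2) (at_right 0)" unfolding b2_def by real_asymp
lemma e1_lim: "((\<lambda>w. exp w) \<longlongrightarrow> (1::real)) (at_right 0)" by real_asymp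
lemma e2_lim: "((\<lambda>w. exp (- w)) \<longlongrightarrow> (1::real)) (at_right 0)" by real_asymp

lemma id_a1: "x * pL l x = a1 (l * x)" unfolding a1_def pL_def by (simp add: mult_ac)
lemma id_b1: "x * qL l x = b1 (l * x)" unfolding b1_def qL_def by (simp add: mult_ac)
lemma id_a2: "x^2 * dL l x = - a2 (l * x)" unfolding a2_def dL_def by (simp add: mult_ac power_mult_distrib)
lemma id_b2_aux: "(d::real) \<noteq> 0 \<Longrightarrow> E * F = 1 \<Longrightarrow> x * (l / d * E + l * E / d * F) = l * x * (1 + E) / d"
  by (simp add: field_simps)

lemma id_b2: assumes "0 < l" "0 < x" shows "x * (pL l x * exp (- l * x) + qL l x * exp (l * x)) = b2 (l * x)"
proof -
  have "exp (- l * x) * exp (l * x) = 1" by (simp add: exp_minus_inverse[symmetric] exp_add[symmetric])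
  moreover have "1 - exp (- l * x) \<noteq> 0" using assms by simp
  ultimately show ?thesis unfolding b2_def pL_def qL_def using id_b2_aux[of "1 - exp (- l * x)" "exp (- l * x)" "exp (l * x)" x l]
    by simp
qed


lemma key_bounds:
  fixes Ml :: "real \<Rightarrow> real \<Rightarrow> real" and M :: "real \<Rightarrow> real"
  assumes L: "\<And>l. l > 0 \<Longrightarrow> is_M_lambda l (Ml l)" and R: "is_M_renyi M"
    and l: "0 < l" and x: "0 < x" "x \<le> N"
    and e1: "\<forall>t\<in>{0..N}. \<bar>Ml l t - M t\<bar> \<le> e" and BM: "\<forall>t\<in>{0..N}. \<bar>M t\<bar> \<le> BM"
    and ex: "\<forall>s\<in>{0<..N}. \<bar>exp (l * s) - 1\<bar> \<le> e \<and> \<bar>exp (- (l * s)) - 1\<bar> \<le> e"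
    and e: "0 \<le> e" "e \<le> 1"
  shows "\<bar>integral {0..x} (\<lambda>t. exp (- l * t) * Ml l t)\<bar> \<le> (BM + 1) * x"
    and "\<bar>integral {0..x} (\<lambda>t. exp (l * t) * Ml l t)\<bar> \<le> 2 * (BM + 1) * x"
    and "\<bar>integral {0..x} (\<lambda>t. exp (- l * t) * Ml l t) + integral {0..x} (\<lambda>t. exp (l * t) * Ml l t)
          - 2 * integral {0..x} (\<lambda>t. 1 * M t)\<bar> \<le> (2 * e * (BM + 1) + 2 * e) * x"
    and "\<bar>Ml l x\<bar> \<le> BM + 1"
proof -
  interpret A: park "Ml l" "pL l" "qL l" "\<lambda>t. exp (- l * t)" "\<lambda>t. exp (l * t)" "dL l" "dL l"
    by (rule parkL[OF l L[OF l]])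
  interpret B: park M "\<lambda>x. 2 / x" "\<lambda>_. 0" "\<lambda>_. 1" "\<lambda>_. 0" "\<lambda>x. - 2 / x^2" "\<lambda>_. 0"
    by (rule parkR[OF R])
  let ?B = "BM + 1"
  have pt: "\<bar>Ml l t\<bar> \<le> ?B" "\<bar>Ml l t - M t\<bar> \<le> e" "exp (- l * t) \<le> 1" "exp (l * t) \<le> 2"
    "\<bar>exp (- l * t) - 1\<bar> \<le> e" "\<bar>exp (l * t) - 1\<bar> \<le> e" if t: "t \<in> {0..x}" for t
  proof -
    have tN: "t \<in> {0..N}" using t x by auto
    show "\<bar>Ml l t - M t\<bar> \<le> e" using e1 tN by blast
    then show "\<bar>Ml l t\<bar> \<le> ?B" using BM tN e by force
    show "exp (- l * t) \<le> 1" using l t by simp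
    show ee: "\<bar>exp (l * t) - 1\<bar> \<le> e"
    proof (cases "t = 0")
      case False then show ?thesis using ex t x e by auto
    qed (use e in simp)
    show "\<bar>exp (- l * t) - 1\<bar> \<le> e"
    proof (cases "t = 0")
      case False then show ?thesis using ex t x e by auto
    qed (use e in simp)
    show "exp (l * t) \<le> 2" using ee e by linarith
  qed
  have IA: "((\<lambda>t. exp (- l * t) * Ml l t) has_integral integral {0..x} (\<lambda>t. exp (- l * t) * Ml l t)) {0..x}"
    by (rule A.intgI) (intro continuous_intros)
  have IB: "((\<lambda>t. exp (l * t) * Ml l t) has_integral integral {0..x} (\<lambda>t. exp (l * t) * Ml l t)) {0..x}"
    by (rule A.intgI) (intro continuous_intros)
  have IC: "((\<lambda>t. 1 * M t) has_integral integral {0..x} (\<lambda>t. 1 * M t)) {0..x}"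
    by (rule B.intgI) (intro continuous_intros)
  have cx: "Henstock_Kurzweil_Integration.content {0..x} = x" using x by simp
  show "\<bar>integral {0..x} (\<lambda>t. exp (- l * t) * Ml l t)\<bar> \<le> ?B * x"
    using has_integral_bound_real[OF _ _ IA, of ?B "{}"] pt cx BM x e
    by (force intro: mul_le[of _ 1 _ ?B, simplified])
  show "\<bar>integral {0..x} (\<lambda>t. exp (l * t) * Ml l t)\<bar> \<le> 2 * ?B * x"
  proof -
    have "\<bar>exp (l * t) * Ml l t\<bar> \<le> 2 * ?B" if "t \<in> {0..x}" for t
      using mul_le[OF _ pt(1)[OF that], of "exp (l * t)" 2] pt(4)[OF that] by simp
    then show ?thesis using has_integral_bound_real[OF _ _ IB, of "2 * ?B" "{}"] cx e by force
  qed
  show "\<bar>Ml l x\<bar> \<le> ?B" using pt(1)[of x] x by simp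
  have ID: "((\<lambda>t. exp (- l * t) * Ml l t + exp (l * t) * Ml l t - 2 * (1 * M t)) has_integral
      integral {0..x} (\<lambda>t. exp (- l * t) * Ml l t) + integral {0..x} (\<lambda>t. exp (l * t) * Ml l t)
          - 2 * integral {0..x} (\<lambda>t. 1 * M t)) {0..x}"
    by (intro has_integral_diff has_integral_add has_integral_mult_right IA IB IC)
  have "\<bar>exp (- l * t) * Ml l t + exp (l * t) * Ml l t - 2 * (1 * M t)\<bar> \<le> 2 * e * ?B + 2 * e"
    if t: "t \<in> {0..x}" for t
  proof -
    have "exp (- l * t) * Ml l t + exp (l * t) * Ml l t - 2 * (1 * M t) =
      (exp (- l * t) - 1) * Ml l t + (exp (l * t) - 1) * Ml l t + 2 * (Ml l t - M t)"
      by (simp add: algebra_simps)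
    moreover have "\<bar>(exp (- l * t) - 1) * Ml l t\<bar> \<le> e * ?B" by (rule mul_le) (use pt t in auto)
    moreover have "\<bar>(exp (l * t) - 1) * Ml l t\<bar> \<le> e * ?B" by (rule mul_le) (use pt t in auto)
    moreover have "\<bar>2 * (Ml l t - M t)\<bar> \<le> 2 * e" using pt(2)[OF t] by simp
    ultimately show ?thesis by linarith
  qed
  then show "\<bar>integral {0..x} (\<lambda>t. exp (- l * t) * Ml l t) + integral {0..x} (\<lambda>t. exp (l * t) * Ml l t)
          - 2 * integral {0..x} (\<lambda>t. 1 * M t)\<bar> \<le> (2 * e * ?B + 2 * e) * x"
    using has_integral_bound_real[OF _ _ ID, of "2 * e * ?B + 2 * e" "{}"] cx e BM x by force
qed


lemma sup_conv:
  fixes Ml :: "real \<Rightarrow> real \<Rightarrow> real" and M :: "real \<Rightarrow> real"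
  assumes L: "\<And>l. l > 0 \<Longrightarrow> is_M_lambda l (Ml l)" and R: "is_M_renyi M"
  shows "0 < e \<Longrightarrow> eventually (\<lambda>l. \<forall>t\<in>{0..real n}. \<bar>Ml l t - M t\<bar> \<le> e) (at_right 0)"
proof (induction n arbitrary: e)
  case 0
  interpret B: park M "\<lambda>x. 2 / x" "\<lambda>_. 0" "\<lambda>_. 1" "\<lambda>_. 0" "\<lambda>x. - 2 / x^2" "\<lambda>_. 0"
    by (rule parkR[OF R])
  have "eventually (\<lambda>l. 0 < l) (at_right (0::real))" by (simp add: eventually_at_right_less)
  then show ?case
  proof (rule eventually_mono)
    fix l :: real assume l: "0 < l"
    interpret A: park "Ml l" "pL l" "qL l" "\<lambda>t. exp (- l * t)" "\<lambda>t. exp (l * t)" "dL l" "dL l"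
      by (rule parkL[OF l L[OF l]])
    show "\<forall>t\<in>{0..real 0}. \<bar>Ml l t - M t\<bar> \<le> e" using A.f01 B.f01 0 by auto
  qed
next
  case (Suc n)
  interpret B: park M "\<lambda>x. 2 / x" "\<lambda>_. 0" "\<lambda>_. 1" "\<lambda>_. 0" "\<lambda>x. - 2 / x^2" "\<lambda>_. 0"
    by (rule parkR[OF R])
  define N where "N = real n"
  have N0: "0 \<le> N" "0 < N + 1" unfolding N_def by auto
  obtain BM where BM: "BM \<ge> 0" "\<forall>t\<in>{0..N}. \<bar>M t\<bar> \<le> BM" using B.bnd by blast
  define Bb where "Bb = BM + 1"
  have Bb: "0 < Bb" unfolding Bb_def using BM by simp
  define e' where "e' = min 1 (e / (5 * Bb + 2))"
  have e': "0 < e'" "e' \<le> 1" "e' * (5 * Bb + 2) \<le> e"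
  proof -
    show "0 < e'" unfolding e'_def using Suc.prems Bb by simp
    show "e' \<le> 1" unfolding e'_def by simp
    have "e' * (5 * Bb + 2) \<le> e / (5 * Bb + 2) * (5 * Bb + 2)"
      by (rule mult_right_mono) (use Bb in \<open>auto simp: e'_def\<close>)
    then show "e' * (5 * Bb + 2) \<le> e" using Bb by simp
  qed
  have ev: "eventually (\<lambda>l. 0 < l \<and> (\<forall>t\<in>{0..N}. \<bar>Ml l t - M t\<bar> \<le> e') \<and>
      (\<forall>x\<in>{0<..N+1}. \<bar>a1 (l * x) - 1\<bar> < e') \<and> (\<forall>x\<in>{0<..N+1}. \<bar>b1 (l * x) - 1\<bar> < e') \<and>
      (\<forall>x\<in>{0<..N+1}. \<bar>exp (l * x) - 1\<bar> < e') \<and> (\<forall>x\<in>{0<..N+1}. \<bar>exp (- (l * x)) - 1\<bar> < e')) (at_right 0)"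
    using Suc.IH[OF e'(1)] unif_small[OF a1_lim e'(1) N0(2)] unif_small[OF b1_lim e'(1) N0(2)]
      unif_small[OF e1_lim e'(1) N0(2)] unif_small[OF e2_lim e'(1) N0(2)]
    by (intro eventually_conj) (auto simp: eventually_at_right_less N_def)
  then show ?case
  proof (rule eventually_mono, safe)
    fix l t :: real
    assume l: "0 < l" and IH: "\<forall>t\<in>{0..N}. \<bar>Ml l t - M t\<bar> \<le> e'"
      and A1: "\<forall>x\<in>{0<..N+1}. \<bar>a1 (l * x) - 1\<bar> < e'" and B1: "\<forall>x\<in>{0<..N+1}. \<bar>b1 (l * x) - 1\<bar> < e'"
      and E1: "\<forall>x\<in>{0<..N+1}. \<bar>exp (l * x) - 1\<bar> < e'" and E2: "\<forall>x\<in>{0<..N+1}. \<bar>exp (- (l * x)) - 1\<bar> < e'"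
      and t: "t \<in> {0..real (Suc n)}"
    interpret A: park "Ml l" "pL l" "qL l" "\<lambda>t. exp (- l * t)" "\<lambda>t. exp (l * t)" "dL l" "dL l"
      by (rule parkL[OF l L[OF l]])
    show "\<bar>Ml l t - M t\<bar> \<le> e"
    proof (cases "t \<le> 1")
      case True
      then show ?thesis using A.f01 B.f01 t Suc.prems by auto
    next
      case False
      define x where "x = t - 1"
      have x: "0 < x" "x \<le> N" using False t unfolding x_def N_def by auto
      have ex: "\<forall>s\<in>{0<..N}. \<bar>exp (l * s) - 1\<bar> \<le> e' \<and> \<bar>exp (- (l * s)) - 1\<bar> \<le> e'"
        using E1 E2 by force
      note K = key_bounds[OF L R l x IH BM(2) ex less_imp_le[OF e'(1)] e'(2)]
      define UA where "UA = integral {0..x} (\<lambda>t. exp (- l * t) * Ml l t)"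
      define VA where "VA = integral {0..x} (\<lambda>t. exp (l * t) * Ml l t)"
      define C where "C = integral {0..x} (\<lambda>t. 1 * M t)"
      have rA: "Ml l t = 1 + pL l x * UA + qL l x * VA"
        using A.repr'[OF x(1)] unfolding UA_def VA_def x_def by simp
      have rB: "M t = 1 + 2 / x * C"
        using B.repr'[OF x(1)] unfolding C_def x_def by simp
      have "x * (Ml l t - M t) = (x * pL l x) * UA + (x * qL l x) * VA - 2 * C"
        using x by (simp add: rA rB algebra_simps)
      also have "\<dots> = (a1 (l * x) - 1) * UA + (b1 (l * x) - 1) * VA + (UA + VA - 2 * C)"
        by (simp add: id_a1 id_b1 algebra_simps)
      finally have eq: "x * (Ml l t - M t) = (a1 (l * x) - 1) * UA + (b1 (l * x) - 1) * VA + (UA + VA - 2 * C)" .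
      have xN1: "x \<in> {0<..N+1}" using x by auto
      have t1: "\<bar>(a1 (l * x) - 1) * UA\<bar> \<le> e' * (Bb * x)"
      proof (rule mul_le)
        show "\<bar>a1 (l * x) - 1\<bar> \<le> e'" using A1 xN1 by force
      qed (use K(1) in \<open>auto simp: UA_def Bb_def\<close>)
      have t2: "\<bar>(b1 (l * x) - 1) * VA\<bar> \<le> e' * (2 * Bb * x)"
      proof (rule mul_le)
        show "\<bar>b1 (l * x) - 1\<bar> \<le> e'" using B1 xN1 by force
      qed (use K(2) in \<open>auto simp: VA_def Bb_def\<close>)
      have t3: "\<bar>UA + VA - 2 * C\<bar> \<le> (2 * e' * Bb + 2 * e') * x"
        using K(3) unfolding UA_def VA_def C_def Bb_def .
      have "x * \<bar>Ml l t - M t\<bar> = \<bar>x * (Ml l t - M t)\<bar>" using x by (simp add: abs_mult)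
      also have "\<dots> \<le> \<bar>(a1 (l * x) - 1) * UA\<bar> + \<bar>(b1 (l * x) - 1) * VA\<bar> + \<bar>UA + VA - 2 * C\<bar>"
        unfolding eq
        using abs_triangle_ineq[of "(a1 (l * x) - 1) * UA + (b1 (l * x) - 1) * VA" "UA + VA - 2 * C"]
          abs_triangle_ineq[of "(a1 (l * x) - 1) * UA" "(b1 (l * x) - 1) * VA"] by linarith
      also have "\<dots> \<le> e' * (Bb * x) + e' * (2 * Bb * x) + (2 * e' * Bb + 2 * e') * x"
        using t1 t2 t3 by linarith
      also have "\<dots> = x * (e' * (5 * Bb + 2))" by (simp add: algebra_simps)
      finally have "x * \<bar>Ml l t - M t\<bar> \<le> x * (e' * (5 * Bb + 2))" .
      then have "\<bar>Ml l t - M t\<bar> \<le> e' * (5 * Bb + 2)" using x by simp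
      then show ?thesis using e'(3) by linarith
    qed
  qed
qed


theorem lemma2:
  fixes Ml :: "real \<Rightarrow> real \<Rightarrow> real" and M :: "real \<Rightarrow> real" and K :: "real set"
  assumes "\<And>l. l > 0 \<Longrightarrow> is_M_lambda l (Ml l)"
    and "is_M_renyi M"
    and "compact K" and "K \<subseteq> {0..}"
  shows "uniform_limit (K - {1, 2}) (\<lambda>l x. deriv0 (Ml l) x) (\<lambda>x. deriv0 M x) (at_right 0)"
proof -
  note L = assms(1) and R = assms(2)
  interpret B: park M "\<lambda>x. 2 / x" "\<lambda>_. 0" "\<lambda>_. 1" "\<lambda>_. 0" "\<lambda>x. - 2 / x^2" "\<lambda>_. 0"
    by (rule parkR[OF R])
  obtain a where a: "\<forall>y\<in>K. \<bar>y\<bar> \<le> a" using compact_imp_bounded[OF assms(3)] unfolding bounded_iff real_norm_def by blast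
  obtain n where n: "a < real n" using reals_Archimedean2 by blast
  define N where "N = real n"
  have KN: "\<And>y. y \<in> K \<Longrightarrow> 0 \<le> y \<and> y \<le> N" using a n assms(4) unfolding N_def by force
  have N0: "0 \<le> N" "0 < N + 1" unfolding N_def by auto
  obtain BM where BM: "BM \<ge> 0" "\<forall>t\<in>{0..N}. \<bar>M t\<bar> \<le> BM" using B.bnd by blast
  define Bb where "Bb = BM + 1"
  have Bb: "0 < Bb" unfolding Bb_def using BM by simp
  show ?thesis unfolding uniform_limit_iff
  proof (intro allI impI)
    fix e :: real assume e: "0 < e"
    define e' where "e' = min 1 (e / (2 * (6 * Bb + 4)))"
    have e': "0 < e'" "e' \<le> 1" "e' * (6 * Bb + 4) < e"
    proof -
      show "0 < e'" unfolding e'_def using e Bb by simp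
      show "e' \<le> 1" unfolding e'_def by simp
      have "e' * (6 * Bb + 4) \<le> e / (2 * (6 * Bb + 4)) * (6 * Bb + 4)"
        by (rule mult_right_mono) (use Bb in \<open>auto simp: e'_def\<close>)
      moreover have "e / (2 * (6 * Bb + 4)) * (6 * Bb + 4) = e / 2"
      proof -
        have "6 * Bb + 4 \<noteq> 0" using Bb by simp
        moreover have "\<And>c. (c::real) \<noteq> 0 \<Longrightarrow> e / (2 * c) * c = e / 2" by (simp add: field_simps)
        ultimately show ?thesis by blast
      qed
      ultimately show "e' * (6 * Bb + 4) < e" using e by linarith
    qed
    have ev: "eventually (\<lambda>l. 0 < l \<and> (\<forall>t\<in>{0..N}. \<bar>Ml l t - M t\<bar> \<le> e') \<and>
        (\<forall>x\<in>{0<..N+1}. \<bar>a2 (l * x) - 1\<bar> < e') \<and> (\<forall>x\<in>{0<..N+1}. \<bar>b2 (l * x) - 2\<bar> < e') \<and>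
        (\<forall>x\<in>{0<..N+1}. \<bar>exp (l * x) - 1\<bar> < e') \<and> (\<forall>x\<in>{0<..N+1}. \<bar>exp (- (l * x)) - 1\<bar> < e')) (at_right 0)"
      using sup_conv[OF L R e'(1), of n] unif_small[OF a2_lim e'(1) N0(2)] unif_small[OF b2_lim e'(1) N0(2)]
        unif_small[OF e1_lim e'(1) N0(2)] unif_small[OF e2_lim e'(1) N0(2)]
      by (intro eventually_conj) (auto simp: eventually_at_right_less N_def)
    then show "\<forall>\<^sub>F l in at_right 0. \<forall>y\<in>K - {1, 2}. dist (deriv0 (Ml l) y) (deriv0 M y) < e"
    proof (rule eventually_mono, elim conjE, intro ballI)
      fix l y :: real
      assume l: "0 < l" and IH: "\<forall>t\<in>{0..N}. \<bar>Ml l t - M t\<bar> \<le> e'"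
        and A2: "\<forall>x\<in>{0<..N+1}. \<bar>a2 (l * x) - 1\<bar> < e'" and B2: "\<forall>x\<in>{0<..N+1}. \<bar>b2 (l * x) - 2\<bar> < e'"
        and E1: "\<forall>x\<in>{0<..N+1}. \<bar>exp (l * x) - 1\<bar> < e'" and E2: "\<forall>x\<in>{0<..N+1}. \<bar>exp (- (l * x)) - 1\<bar> < e'"
        and yK: "y \<in> K - {1, 2}"
      interpret A: park "Ml l" "pL l" "qL l" "\<lambda>t. exp (- l * t)" "\<lambda>t. exp (l * t)" "dL l" "dL l"
        by (rule parkL[OF l L[OF l]])
      have y: "y \<in> K" "y \<noteq> 1" "y \<noteq> 2" using yK by auto
      have y0: "0 \<le> y" "y \<le> N" using KN[OF y(1)] by auto
      consider "y < 1" | "1 < y" "y < 2" | "2 < y" using y by linarith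
      then show "dist (deriv0 (Ml l) y) (deriv0 M y) < e"
      proof cases
        case 1
        then show ?thesis using A.deriv_01 B.deriv_01 y0 e by simp
      next
        case 2
        then show ?thesis using A.deriv_12 B.deriv_12 e by simp
      next
        case 3
        define x where "x = y - 1"
        have x: "0 < x" "x \<le> N" "1 < x" using 3 y0 unfolding x_def by auto
        have ex: "\<forall>s\<in>{0<..N}. \<bar>exp (l * s) - 1\<bar> \<le> e' \<and> \<bar>exp (- (l * s)) - 1\<bar> \<le> e'"
          using E1 E2 by force
        note K = key_bounds[OF L R l x(1,2) IH BM(2) ex less_imp_le[OF e'(1)] e'(2)]
        define UA where "UA = integral {0..x} (\<lambda>t. exp (- l * t) * Ml l t)"
        define VA where "VA = integral {0..x} (\<lambda>t. exp (l * t) * Ml l t)"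
        define C where "C = integral {0..x} (\<lambda>t. 1 * M t)"
        define s where "s = pL l x * exp (- l * x) + qL l x * exp (l * x)"
        have dA: "deriv0 (Ml l) y = dL l x * UA + dL l x * VA + s * Ml l x"
          using A.deriv_gt2'[OF 3] unfolding UA_def VA_def s_def x_def by simp
        have dB: "deriv0 M y = - 2 / x^2 * C + 2 / x * M x"
          using B.deriv_gt2'[OF 3] unfolding C_def x_def by simp
        have xs: "x * s = b2 (l * x)" unfolding s_def using id_b2[OF l x(1)] .
        have "x^2 * (deriv0 (Ml l) y - deriv0 M y) = (x^2 * dL l x) * (UA + VA) + x * (x * s) * Ml l x
            - (- 2 * C + 2 * x * M x)"
          using x(1) unfolding dA dB by (simp add: field_simps power2_eq_square)
        also have "\<dots> = - ((a2 (l * x) - 1) * (UA + VA)) - (UA + VA - 2 * C)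
            + x * ((b2 (l * x) - 2) * Ml l x + 2 * (Ml l x - M x))"
          unfolding xs id_a2 by (simp add: algebra_simps)
        finally have eq: "x^2 * (deriv0 (Ml l) y - deriv0 M y) = - ((a2 (l * x) - 1) * (UA + VA)) - (UA + VA - 2 * C)
            + x * ((b2 (l * x) - 2) * Ml l x + 2 * (Ml l x - M x))" .
        have xN1: "x \<in> {0<..N+1}" using x by auto
        have t1: "\<bar>(a2 (l * x) - 1) * (UA + VA)\<bar> \<le> e' * (3 * Bb * x)"
        proof (rule mul_le)
          show "\<bar>a2 (l * x) - 1\<bar> \<le> e'" using A2 xN1 by force
          show "\<bar>UA + VA\<bar> \<le> 3 * Bb * x" using K(1,2) unfolding UA_def VA_def Bb_def by linarith
        qed
        have t2: "\<bar>UA + VA - 2 * C\<bar> \<le> (2 * e' * Bb + 2 * e') * x"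
          using K(3) unfolding UA_def VA_def C_def Bb_def .
        have t3a: "\<bar>(b2 (l * x) - 2) * Ml l x\<bar> \<le> e' * Bb"
        proof (rule mul_le)
          show "\<bar>b2 (l * x) - 2\<bar> \<le> e'" using B2 xN1 by force
          show "\<bar>Ml l x\<bar> \<le> Bb" using K(4) unfolding Bb_def .
        qed
        have t3b: "\<bar>Ml l x - M x\<bar> \<le> e'" using IH x by auto
        have t3: "\<bar>x * ((b2 (l * x) - 2) * Ml l x + 2 * (Ml l x - M x))\<bar> \<le> x * (e' * Bb + 2 * e')"
        proof -
          have "\<bar>(b2 (l * x) - 2) * Ml l x + 2 * (Ml l x - M x)\<bar> \<le> e' * Bb + 2 * e'"
            using t3a t3b abs_triangle_ineq[of "(b2 (l * x) - 2) * Ml l x" "2 * (Ml l x - M x)"]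
              abs_mult[of 2 "Ml l x - M x"] by simp
          then show ?thesis using x(1) by (simp add: abs_mult)
        qed
        have "x^2 * \<bar>deriv0 (Ml l) y - deriv0 M y\<bar> = \<bar>x^2 * (deriv0 (Ml l) y - deriv0 M y)\<bar>"
          by (simp add: abs_mult)
        also have "\<dots> \<le> \<bar>(a2 (l * x) - 1) * (UA + VA)\<bar> + \<bar>UA + VA - 2 * C\<bar>
            + \<bar>x * ((b2 (l * x) - 2) * Ml l x + 2 * (Ml l x - M x))\<bar>"
          unfolding eq by linarith
        also have "\<dots> \<le> e' * (3 * Bb * x) + (2 * e' * Bb + 2 * e') * x + x * (e' * Bb + 2 * e')"
          using t1 t2 t3 by linarith
        also have "\<dots> = x * (e' * (6 * Bb + 4))" by (simp add: algebra_simps)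
        also have "\<dots> \<le> x^2 * (e' * (6 * Bb + 4))"
          by (rule mult_right_mono) (use x e' Bb in \<open>auto simp: power2_eq_square\<close>)
        finally have "\<bar>deriv0 (Ml l) y - deriv0 M y\<bar> \<le> e' * (6 * Bb + 4)" using x(1) by simp
        then show ?thesis using e'(3) by (simp add: dist_real_def)
      qed
    qed
  qed
qed

end
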